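(* Let $\tau_0,\tau_1,\tau_2>0$, $\alpha>0$, and let $a\in\mathcal{B}_\alpha$. Then every root of the polynomial $p_a(z)=z^n+a_1z^{n-1}+\dots+a_n$ has modulus less than $\alpha$. Consequently the companion matrix $A=\mathrm{CC}(a)$ has spectral radius $\rho(A)<\alpha$.
   Context: $\mathcal{C}=\{z\in\mathbb{C}:\Re z\ge(1+\tau_0)|\Im z|\}\cap\{z\in\mathbb{C}:\tau_1<\Re z<\tau_2\}$, and $\mathcal{B}_\alpha=\{a\in\mathbb{R}^n:\ p_a(z)/z^n\in\mathcal{C}\text{ for all } z\in\mathbb{C} \text{ with } |z|=\alpha\}$. $\mathrm{CC}(a)$ is the $n\times n$ companion matrix with ones on the superdiagonal, zeros elsewhere in the first $n-1$ rows, and last row $[-a_n,\dots,-a_1]$; its characteristic polynomial is $p_a$. *)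

theory Defs
  imports "Jordan_Normal_Form.Spectral_Radius"
begin

definition cone_C :: "real \<Rightarrow> real \<Rightarrow> real \<Rightarrow> complex set" where
  "cone_C \<tau>0 \<tau>1 \<tau>2 =
     {z. Re z \<ge> (1 + \<tau>0) * \<bar>Im z\<bar>} \<inter> {z. \<tau>1 < Re z \<and> Re z < \<tau>2}"

definition p_a :: "nat \<Rightarrow> (nat \<Rightarrow> real) \<Rightarrow> complex poly" where
  "p_a n a = monom 1 n + (\<Sum>k = 1..n. monom (complex_of_real (a k)) (n - k))"

definition B_alpha :: "real \<Rightarrow> real \<Rightarrow> real \<Rightarrow> nat \<Rightarrow> real \<Rightarrow> (nat \<Rightarrow> real) set" where
  "B_alpha \<tau>0 \<tau>1 \<tau>2 n \<alpha> =
     {a. \<forall>z::complex. cmod z = \<alpha> \<longrightarrow> poly (p_a n a) z / z ^ n \<in> cone_C \<tau>0 \<tau>1 \<tau>2}"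

text \<open>Companion matrix CC(a) (0-indexed rows/columns): ones on the superdiagonal in the
  first n-1 rows, last row [-a_n, ..., -a_1].\<close>
definition CC :: "nat \<Rightarrow> (nat \<Rightarrow> real) \<Rightarrow> real mat" where
  "CC n a = mat n n (\<lambda>(i, j). if i < n - 1 then (if j = i + 1 then 1 else 0) else - a (n - j))"

end

theory Submission
  imports Defs "HOL-Complex_Analysis.Complex_Analysis"
begin

lemma poly_pa: "poly (p_a n a) z = z^n + (\<Sum>k = 1..n. complex_of_real (a k) * z^(n-k))"
  by (simp add: p_a_def poly_sum poly_monom)

lemma pa_div:
  assumes "z \<noteq> 0"
  shows "poly (p_a n a) z / z^n = 1 + (\<Sum>k = 1..n. complex_of_real (a k) * (inverse z)^k)"
proof -
  have "poly (p_a n a) z / z^n = z^n / z^n + (\<Sum>k = 1..n. complex_of_real (a k) * z^(n-k)) / z^n"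
    by (simp add: poly_pa add_divide_distrib)
  also have "(\<Sum>k = 1..n. complex_of_real (a k) * z^(n-k)) / z^n
      = (\<Sum>k = 1..n. complex_of_real (a k) * (inverse z)^k)"
    unfolding sum_divide_distrib
  proof (rule sum.cong[OF refl])
    fix k assume "k \<in> {1..n}"
    hence "k \<le> n" by auto
    hence "z^(n-k) / z^n = (inverse z)^k" using assms
      by (simp add: power_diff power_inverse divide_inverse)
    thus "complex_of_real (a k) * z ^ (n - k) / z ^ n = complex_of_real (a k) * inverse z ^ k"
      by (metis times_divide_eq_right)
  qed
  finally show ?thesis using assms by simp
qed

lemma roots_part:
  fixes \<tau>0 \<tau>1 \<tau>2 \<alpha> :: real and n :: nat and a :: "nat \<Rightarrow> real"
  assumes "\<tau>1 > 0" "\<alpha> > 0"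
    and B: "a \<in> B_alpha \<tau>0 \<tau>1 \<tau>2 n \<alpha>"
  shows "poly (p_a n a) z = 0 \<Longrightarrow> cmod z < \<alpha>"
proof (rule ccontr)
  assume r: "poly (p_a n a) z = 0" and nl: "\<not> cmod z < \<alpha>"
  define Q where "Q w = 1 + (\<Sum>k = 1..n. complex_of_real (a k) * w^k)" for w
  have hol: "(\<lambda>w. exp (- Q w)) holomorphic_on UNIV"
    unfolding Q_def by (intro holomorphic_intros)
  have bd: "norm (exp (- Q w)) \<le> exp (- \<tau>1)" if "w \<in> cball 0 (1/\<alpha>)" for w
  proof (rule maximum_modulus_frontier[of "\<lambda>w. exp (- Q w)" "cball 0 (1/\<alpha>)"])
    show "(\<lambda>w. exp (- Q w)) holomorphic_on interior (cball 0 (1 / \<alpha>))"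
      using hol holomorphic_on_subset by blast
    show "continuous_on (closure (cball 0 (1 / \<alpha>))) (\<lambda>w. exp (- Q w))"
      using hol holomorphic_on_imp_continuous_on continuous_on_subset by blast
    show "bounded (cball (0::complex) (1 / \<alpha>))" by simp
    show "w \<in> cball 0 (1 / \<alpha>)" by fact
    fix u assume "u \<in> frontier (cball (0::complex) (1 / \<alpha>))"
      hence u: "cmod u = 1/\<alpha>" using assms(2) by (simp add: frontier_cball)
      hence u0: "u \<noteq> 0" using assms(2) by auto
      have "cmod (inverse u) = \<alpha>" using u by (simp add: norm_inverse)
      hence "poly (p_a n a) (inverse u) / (inverse u)^n \<in> cone_C \<tau>0 \<tau>1 \<tau>2"
        using B unfolding B_alpha_def by auto
      moreover have "poly (p_a n a) (inverse u) / (inverse u)^n = Q u"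
        using pa_div[of "inverse u" n a] u0 unfolding Q_def by simp
      ultimately have "Re (Q u) > \<tau>1" unfolding cone_C_def by auto
      thus "cmod (exp (- Q u)) \<le> exp (- \<tau>1)" by simp
  qed
  have z0: "z \<noteq> 0" using nl assms(2) by auto
  have "cmod (inverse z) = 1/cmod z" by (simp add: norm_inverse divide_inverse)
  also have "\<dots> \<le> 1/\<alpha>" using nl assms(2) by (intro divide_left_mono) (auto intro!: mult_pos_pos)
  finally have "cmod (inverse z) \<le> 1/\<alpha>" .
  hence "norm (exp (- Q (inverse z))) \<le> exp (- \<tau>1)" using bd by simp
  moreover have "Q (inverse z) = 0"
    using pa_div[of z n a] z0 r unfolding Q_def by simp
  ultimately show False using assms(1) by simp
qed

lemma eig_root:
  fixes a :: "nat \<Rightarrow> real"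
  assumes n: "n \<ge> 1" and ev: "eigenvalue (map_mat complex_of_real (CC n a)) l"
  shows "poly (p_a n a) l = 0"
proof -
  define A where "A = map_mat complex_of_real (CC n a)"
  have A: "A \<in> carrier_mat n n" unfolding A_def CC_def by simp
  obtain v where v: "v \<in> carrier_vec n" "v \<noteq> 0\<^sub>v n" "A *\<^sub>v v = l \<cdot>\<^sub>v v"
    using ev A unfolding eigenvalue_def eigenvector_def A_def by auto
  have Aij: "A $$ (i,j) = (if i < n - 1 then (if j = i + 1 then 1 else 0) else - complex_of_real (a (n - j)))"
    if "i < n" "j < n" for i j
    using that unfolding A_def CC_def by simp
  have row: "(A *\<^sub>v v) $ i = (\<Sum>j<n. A $$ (i,j) * v $ j)" if "i < n" for i
    using that A v(1) by (auto simp: mult_mat_vec_def scalar_prod_def row_def lessThan_atLeast0)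
  have step: "v $ (i+1) = l * v $ i" if "i < n - 1" for i
  proof -
    have "(A *\<^sub>v v) $ i = (\<Sum>j<n. (if j = i + 1 then 1 else 0) * v $ j)"
      using that row[of i] Aij[of i] by (auto intro!: sum.cong)
    also have "\<dots> = v $ (i+1)" using that
      by (simp add: if_distrib[of "\<lambda>x. x * _"] sum.delta cong: if_cong)
    finally show ?thesis using v(3) that v(1) by simp
  qed
  have pw: "v $ i = l^i * v $ 0" if "i < n" for i
    using that
  proof (induction i)
    case 0 then show ?case by simp
  next
    case (Suc i)
    then have "v $ (i+1) = l * v $ i" using step[of i] by simp
    then show ?case using Suc by simp
  qed
  have v0: "v $ 0 \<noteq> 0"
  proof
    assume "v $ 0 = 0"
    hence "v = 0\<^sub>v n" using pw v(1) by (intro eq_vecI) auto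
    thus False using v(2) by simp
  qed
  have "(A *\<^sub>v v) $ (n-1) = (\<Sum>j<n. A $$ (n-1,j) * v $ j)" using row n by simp
  also have "\<dots> = (\<Sum>j<n. - complex_of_real (a (n - j)) * v $ j)"
  proof (rule sum.cong[OF refl])
    fix j assume "j \<in> {..<n}"
    thus "A $$ (n-1,j) * v $ j = - complex_of_real (a (n - j)) * v $ j" using n Aij[of "n-1" j] by simp
  qed
  also have "\<dots> = (\<Sum>j<n. - (v $ 0) * (complex_of_real (a (n - j)) * l ^ j))"
  proof (rule sum.cong[OF refl])
    fix j assume "j \<in> {..<n}"
    hence "v $ j = l^j * v $ 0" by (intro pw) simp
    thus "- complex_of_real (a (n - j)) * v $ j = - (v $ 0) * (complex_of_real (a (n - j)) * l ^ j)"
      by (simp add: algebra_simps)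
  qed
  also have "\<dots> = - (v $ 0) * (\<Sum>j<n. complex_of_real (a (n - j)) * l ^ j)"
    by (simp add: sum_distrib_left)
  finally have e0: "(A *\<^sub>v v) $ (n-1) = - (v $ 0) * (\<Sum>j<n. complex_of_real (a (n - j)) * l ^ j)" .
  have e2: "(A *\<^sub>v v) $ (n-1) = l * v $ (n-1)" using v(3) v(1) n by simp
  have e3: "v $ (n-1) = l^(n-1) * v $ 0" using pw[of "n-1"] n by simp
  have e1: "l * l^(n-1) * v $ 0 = - (v $ 0) * (\<Sum>j<n. complex_of_real (a (n - j)) * l ^ j)"
  proof -
    have "l * l^(n-1) * v $ 0 = l * v $ (n-1)" unfolding e3 by (rule mult.assoc)
    also have "\<dots> = (A *\<^sub>v v) $ (n-1)" by (rule e2[symmetric])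
    also have "\<dots> = - (v $ 0) * (\<Sum>j<n. complex_of_real (a (n - j)) * l ^ j)" by (rule e0)
    finally show ?thesis .
  qed
  have ln: "l * l^(n-1) = l^n"
  proof -
    have "Suc (n-1) = n" using n by simp
    then show ?thesis by (metis power_Suc)
  qed
  have re: "(\<Sum>j<n. complex_of_real (a (n - j)) * l ^ j) = (\<Sum>k = 1..n. complex_of_real (a k) * l^(n-k))"
    by (rule sum.reindex_bij_witness[of _ "\<lambda>k. n - k" "\<lambda>j. n - j"]) auto
  have "v $ 0 * (l^n + (\<Sum>k = 1..n. complex_of_real (a k) * l^(n-k))) = 0"
  proof -
    have "v $ 0 * l^n = - (v $ 0) * (\<Sum>k = 1..n. complex_of_real (a k) * l^(n-k))"
    proof -
      have "v $ 0 * l^n = l * l^(n-1) * v $ 0" by (simp only: ln mult.commute)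
      also have "\<dots> = - (v $ 0) * (\<Sum>k = 1..n. complex_of_real (a k) * l^(n-k))"
        by (simp only: e1 re)
      finally show ?thesis .
    qed
    thus ?thesis by (simp add: distrib_left)
  qed
  thus ?thesis using v0 by (simp add: poly_pa)
qed

theorem lemma4p2:
  fixes \<tau>0 \<tau>1 \<tau>2 \<alpha> :: real and n :: nat and a :: "nat \<Rightarrow> real"
  assumes "\<tau>0 > 0" "\<tau>1 > 0" "\<tau>2 > 0" "\<alpha> > 0" "n \<ge> 1"
    and "a \<in> B_alpha \<tau>0 \<tau>1 \<tau>2 n \<alpha>"
  shows "(\<forall>z. poly (p_a n a) z = 0 \<longrightarrow> cmod z < \<alpha>)
       \<and> spectral_radius (map_mat complex_of_real (CC n a)) < \<alpha>"
proof -
  have R: "\<forall>z. poly (p_a n a) z = 0 \<longrightarrow> cmod z < \<alpha>"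
    using roots_part[OF assms(2,4,6)] by blast
  have A: "map_mat complex_of_real (CC n a) \<in> carrier_mat n n" unfolding CC_def by simp
  obtain l where "l \<in> spectrum (map_mat complex_of_real (CC n a))"
    "spectral_radius (map_mat complex_of_real (CC n a)) = cmod l"
    using spectral_radius_mem_max(1)[OF A] assms(5) by force
  moreover have "poly (p_a n a) l = 0"
    using calculation(1) eig_root[OF assms(5)] unfolding spectrum_def by auto
  ultimately show ?thesis using R by auto
qed

end
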